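(* Let $n,p$ be positive integers, $X\in\mathbb{R}^{n\times p}$, $\mathbf y\in\mathbb{R}^n$ and $\delta>0$. For any $\mathbf s\in\{0,1\}^p$, the least squares estimate $\widehat{\boldsymbol\beta}_{[\mathbf s]}=(X_{[\mathbf s]}^\top X_{[\mathbf s]})^{-1}X_{[\mathbf s]}^\top\mathbf y$ exists (i.e. $X_{[\mathbf s]}^\top X_{[\mathbf s]}$ is invertible) if and only if $L_{\mathbf s}$ is invertible, and in that case \[ X_{[\mathbf s]}\widehat{\boldsymbol\beta}_{[\mathbf s]}=X_{\mathbf s}\widetilde{\boldsymbol\beta}_{\mathbf s}. \]
   Context: For a binary vector $\mathbf s\in\{0,1\}^p$, $|\mathbf s|=\sum_j s_j$ and $X_{[\mathbf s]}$ is the $n\times|\mathbf s|$ matrix obtained from $X$ by keeping only the columns $j$ with $s_j=1$. For $\mathbf t\in[0,1]^p$, $T_{\mathbf t}=\mathrm{Diag}(t_1,\dots,t_p)$, $X_{\mathbf t}=XT_{\mathbf t}$, $L_{\mathbf t}=\frac1n[X_{\mathbf t}^\top X_{\mathbf t}+\delta(I-T_{\mathbf t}^2)]$ with $I$ the $p\times p$ identity, and $\widetilde{\boldsymbol\beta}_{\mathbf t}:=L_{\mathbf t}^{+}\left(X_{\mathbf t}^\top\mathbf y/n\right)$ with $L_{\mathbf t}^+$ the Moore–Penrose pseudo-inverse. *)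

theory Defs
  imports "Jordan_Normal_Form.Matrix" "Jordan_Normal_Form.DL_Submatrix"
begin

definition Tmat :: "real vec \<Rightarrow> real mat" where
  "Tmat t = mat (dim_vec t) (dim_vec t) (\<lambda>(i,j). if i = j then t $ i else 0)"

definition Xt :: "real mat \<Rightarrow> real vec \<Rightarrow> real mat" where
  "Xt X t = X * Tmat t"

definition Lmat :: "real mat \<Rightarrow> real \<Rightarrow> real vec \<Rightarrow> real mat" where
  "Lmat X \<delta> t = (1 / real (dim_row X)) \<cdot>\<^sub>m
     ((Xt X t)\<^sup>T * Xt X t + \<delta> \<cdot>\<^sub>m (1\<^sub>m (dim_vec t) - Tmat t * Tmat t))"

definition pinv :: "real mat \<Rightarrow> real mat" where
  "pinv A = (THE B. B \<in> carrier_mat (dim_col A) (dim_row A) \<and>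
                    A * B * A = A \<and> B * A * B = B \<and>
                    (A * B)\<^sup>T = A * B \<and> (B * A)\<^sup>T = B * A)"

definition inv_mat :: "real mat \<Rightarrow> real mat" where
  "inv_mat A = (THE B. B \<in> carrier_mat (dim_row A) (dim_row A) \<and>
                       inverts_mat A B \<and> inverts_mat B A)"

definition beta_tilde :: "real mat \<Rightarrow> real vec \<Rightarrow> real \<Rightarrow> real vec \<Rightarrow> real vec" where
  "beta_tilde X y \<delta> t = pinv (Lmat X \<delta> t) *\<^sub>v
     ((1 / real (dim_row X)) \<cdot>\<^sub>v ((Xt X t)\<^sup>T *\<^sub>v y))"

definition Xsub :: "real mat \<Rightarrow> real vec \<Rightarrow> real mat" where
  "Xsub X s = submatrix X UNIV {j. j < dim_vec s \<and> s $ j = 1}"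

definition beta_hat :: "real mat \<Rightarrow> real vec \<Rightarrow> real vec \<Rightarrow> real vec" where
  "beta_hat X y s = inv_mat ((Xsub X s)\<^sup>T * Xsub X s) *\<^sub>v ((Xsub X s)\<^sup>T *\<^sub>v y)"

end

theory Submission
  imports Defs
begin

lemma massoc: "dim_col A = dim_row B \<Longrightarrow> dim_col B = dim_row C \<Longrightarrow> A * B * C = A * (B * C)"
  by (rule assoc_mult_mat[of A "dim_row A" "dim_col A" B "dim_col B" C "dim_col C"]) auto

lemma smult_l: "dim_col A = dim_row B \<Longrightarrow> (c \<cdot>\<^sub>m A) * B = (c::real) \<cdot>\<^sub>m (A * B)"
  by (rule mult_smult_assoc_mat[of A "dim_row A" "dim_col A" B "dim_col B"]) auto
lemma smult_r: "dim_col A = dim_row B \<Longrightarrow> A * (c \<cdot>\<^sub>m B) = (c::real) \<cdot>\<^sub>m (A * B)"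
  by (rule mult_smult_distrib[of A "dim_row A" "dim_col A" B "dim_col B"]) auto
lemma add_mult_d: "dim_row A = dim_row B \<Longrightarrow> dim_col A = dim_col B \<Longrightarrow> dim_col A = dim_row C
   \<Longrightarrow> (A + B) * (C::real mat) = A * C + B * C"
  by (rule add_mult_distrib_mat[of A "dim_row A" "dim_col A" B C "dim_col C"]) auto
lemma mult_add_d: "dim_row B = dim_row C \<Longrightarrow> dim_col B = dim_col C \<Longrightarrow> dim_col A = dim_row B
   \<Longrightarrow> (A::real mat) * (B + C) = A * B + A * C"
  by (rule mult_add_distrib_mat[of A "dim_row A" "dim_col A" B "dim_col B" C]) auto

lemma smult_smult_m: "a \<cdot>\<^sub>m (b \<cdot>\<^sub>m (A::real mat)) = (a * b) \<cdot>\<^sub>m A"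
  by (rule eq_matI) auto
lemma smult_one_m: "1 \<cdot>\<^sub>m (A::real mat) = A"
  by (rule eq_matI) auto
lemma smult_zero_m: "0 \<cdot>\<^sub>m (A::real mat) = 0\<^sub>m (dim_row A) (dim_col A)"
  by (rule eq_matI) auto

lemma block_prod:
  fixes E A B Q :: "real mat"
  assumes E: "E \<in> carrier_mat p k" and A: "A \<in> carrier_mat k k" and B: "B \<in> carrier_mat k k"
    and Q: "Q \<in> carrier_mat p p"
    and EE: "E\<^sup>T * E = 1\<^sub>m k" and EQ: "E\<^sup>T * Q = 0\<^sub>m k p" and QE: "Q * E = 0\<^sub>m p k"
    and QQ: "Q * Q = Q"
  shows "(E * A * E\<^sup>T + d \<cdot>\<^sub>m Q) * (E * B * E\<^sup>T + e \<cdot>\<^sub>m Q) = E * (A * B) * E\<^sup>T + (d * e) \<cdot>\<^sub>m Q"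
proof -
  have Et: "E\<^sup>T \<in> carrier_mat k p" using E by simp
  have c1: "E * A * E\<^sup>T * (E * B * E\<^sup>T) = E * (A * B) * E\<^sup>T"
  proof -
    have "E * A * E\<^sup>T * (E * B * E\<^sup>T) = E * A * (E\<^sup>T * E) * B * E\<^sup>T"
      using E A B Et by (simp add: massoc)
    also have "\<dots> = E * (A * B) * E\<^sup>T" using E A B Et EE by simp
    finally show ?thesis .
  qed
  have c2: "E * A * E\<^sup>T * (e \<cdot>\<^sub>m Q) = 0\<^sub>m p p"
  proof -
    have "E * A * E\<^sup>T * (e \<cdot>\<^sub>m Q) = e \<cdot>\<^sub>m (E * A * (E\<^sup>T * Q))"
      using E A Q Et by (simp add: smult_r smult_l massoc)
    thus ?thesis using EQ E A by simp
  qed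
  have c3: "d \<cdot>\<^sub>m Q * (E * B * E\<^sup>T) = 0\<^sub>m p p"
  proof -
    have "d \<cdot>\<^sub>m Q * (E * B * E\<^sup>T) = d \<cdot>\<^sub>m ((Q * E) * B * E\<^sup>T)"
      using E B Q Et by (simp add: smult_r smult_l massoc)
    thus ?thesis using QE E B by simp
  qed
  have c4: "d \<cdot>\<^sub>m Q * (e \<cdot>\<^sub>m Q) = (d * e) \<cdot>\<^sub>m Q"
    using Q QQ by (simp add: smult_r smult_l smult_smult_m mult.commute)
  have "(E * A * E\<^sup>T + d \<cdot>\<^sub>m Q) * (E * B * E\<^sup>T + e \<cdot>\<^sub>m Q) =
     E * A * E\<^sup>T * (E * B * E\<^sup>T) + d \<cdot>\<^sub>m Q * (E * B * E\<^sup>T) + (E * A * E\<^sup>T * (e \<cdot>\<^sub>m Q) + d \<cdot>\<^sub>m Q * (e \<cdot>\<^sub>m Q))"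
    using E A B Q Et by (simp add: add_mult_d mult_add_d)
  also have "\<dots> = E * (A * B) * E\<^sup>T + (d * e) \<cdot>\<^sub>m Q"
    unfolding c1 c2 c3 c4 using E A B Q Et by (simp, intro eq_matI, auto)
  finally show ?thesis .
qed


lemma inv_block:
  fixes E A :: "real mat"
  assumes E: "E \<in> carrier_mat p k" and A: "A \<in> carrier_mat k k"
    and EE: "E\<^sup>T * E = 1\<^sub>m k" and c: "c \<noteq> 0" and d: "d \<noteq> 0"
  defines "Q \<equiv> 1\<^sub>m p - E * E\<^sup>T"
  defines "L \<equiv> c \<cdot>\<^sub>m (E * A * E\<^sup>T + d \<cdot>\<^sub>m Q)"
  shows "Q \<in> carrier_mat p p" "E\<^sup>T * Q = 0\<^sub>m k p" "Q * E = 0\<^sub>m p k" "Q * Q = Q"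
    "E * E\<^sup>T + Q = 1\<^sub>m p"
    "\<And>B. B \<in> carrier_mat k k \<Longrightarrow> A * B = 1\<^sub>m k \<Longrightarrow> B * A = 1\<^sub>m k \<Longrightarrow>
       L * ((1/c) \<cdot>\<^sub>m (E * B * E\<^sup>T + (1/d) \<cdot>\<^sub>m Q)) = 1\<^sub>m p \<and>
       ((1/c) \<cdot>\<^sub>m (E * B * E\<^sup>T + (1/d) \<cdot>\<^sub>m Q)) * L = 1\<^sub>m p"
    "\<And>M. M \<in> carrier_mat p p \<Longrightarrow> L * M = 1\<^sub>m p \<Longrightarrow> M * L = 1\<^sub>m p \<Longrightarrow>
       A * (c \<cdot>\<^sub>m (E\<^sup>T * M * E)) = 1\<^sub>m k \<and> (c \<cdot>\<^sub>m (E\<^sup>T * M * E)) * A = 1\<^sub>m k"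
proof -
  have Et: "E\<^sup>T \<in> carrier_mat k p" using E by simp
  have EEt: "E * E\<^sup>T \<in> carrier_mat p p" using E by simp
  show Qc: "Q \<in> carrier_mat p p" unfolding Q_def using E by (intro minus_carrier_mat) auto
  show EQ: "E\<^sup>T * Q = 0\<^sub>m k p" unfolding Q_def using E Et EE
    by (simp add: mult_minus_distrib_mat[OF Et one_carrier_mat EEt] massoc[symmetric] Et)
  show QE: "Q * E = 0\<^sub>m p k" unfolding Q_def using E Et EE
    by (simp add: minus_mult_distrib_mat[OF one_carrier_mat EEt E] massoc)
  show QQ: "Q * Q = Q"
  proof -
    have "Q * Q = (1\<^sub>m p - E * E\<^sup>T) * Q" unfolding Q_def ..
    also have "\<dots> = Q - E * (E\<^sup>T * Q)" using EEt Qc E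
      by (simp add: minus_mult_distrib_mat[OF one_carrier_mat EEt Qc] massoc)
    also have "\<dots> = Q" using EQ Qc E by (simp, intro eq_matI, auto)
    finally show ?thesis .
  qed
  show EQ1: "E * E\<^sup>T + Q = 1\<^sub>m p" unfolding Q_def using EEt
    by (intro eq_matI) auto
  have E1E: "E * 1\<^sub>m k * E\<^sup>T = E * E\<^sup>T" using E by simp
  show "L * ((1/c) \<cdot>\<^sub>m (E * B * E\<^sup>T + (1/d) \<cdot>\<^sub>m Q)) = 1\<^sub>m p \<and>
       ((1/c) \<cdot>\<^sub>m (E * B * E\<^sup>T + (1/d) \<cdot>\<^sub>m Q)) * L = 1\<^sub>m p"
    if B: "B \<in> carrier_mat k k" and AB: "A * B = 1\<^sub>m k" and BA: "B * A = 1\<^sub>m k" for B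
  proof
    have "L * ((1/c) \<cdot>\<^sub>m (E * B * E\<^sup>T + (1/d) \<cdot>\<^sub>m Q)) =
       (c * (1/c)) \<cdot>\<^sub>m ((E * A * E\<^sup>T + d \<cdot>\<^sub>m Q) * (E * B * E\<^sup>T + (1/d) \<cdot>\<^sub>m Q))"
      unfolding L_def using E A B Qc by (simp add: smult_l smult_r smult_smult_m)
    also have "\<dots> = 1\<^sub>m p" using c d E1E EQ1
      by (simp add: block_prod[OF E A B Qc EE EQ QE QQ] AB smult_one_m)
    finally show "L * ((1/c) \<cdot>\<^sub>m (E * B * E\<^sup>T + (1/d) \<cdot>\<^sub>m Q)) = 1\<^sub>m p" .
    have "((1/c) \<cdot>\<^sub>m (E * B * E\<^sup>T + (1/d) \<cdot>\<^sub>m Q)) * L =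
       ((1/c) * c) \<cdot>\<^sub>m ((E * B * E\<^sup>T + (1/d) \<cdot>\<^sub>m Q) * (E * A * E\<^sup>T + d \<cdot>\<^sub>m Q))"
      unfolding L_def using E A B Qc by (simp add: smult_l smult_r smult_smult_m)
    also have "\<dots> = 1\<^sub>m p" using c d E1E EQ1
      by (simp add: block_prod[OF E B A Qc EE EQ QE QQ] BA smult_one_m)
    finally show "((1/c) \<cdot>\<^sub>m (E * B * E\<^sup>T + (1/d) \<cdot>\<^sub>m Q)) * L = 1\<^sub>m p" .
  qed
  show "A * (c \<cdot>\<^sub>m (E\<^sup>T * M * E)) = 1\<^sub>m k \<and> (c \<cdot>\<^sub>m (E\<^sup>T * M * E)) * A = 1\<^sub>m k"
    if M: "M \<in> carrier_mat p p" and LM: "L * M = 1\<^sub>m p" and MLi: "M * L = 1\<^sub>m p" for M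
  proof
    have EtL: "E\<^sup>T * L = c \<cdot>\<^sub>m (A * E\<^sup>T)"
    proof -
      have "E\<^sup>T * L = c \<cdot>\<^sub>m (E\<^sup>T * E * A * E\<^sup>T + d \<cdot>\<^sub>m (E\<^sup>T * Q))"
        unfolding L_def using E A Qc by (simp add: smult_r mult_add_d massoc)
      also have "\<dots> = c \<cdot>\<^sub>m (A * E\<^sup>T)" using EE EQ A E by simp
      finally show ?thesis .
    qed
    have LE: "L * E = c \<cdot>\<^sub>m (E * A)"
    proof -
      have "L * E = c \<cdot>\<^sub>m (E * A * (E\<^sup>T * E) + d \<cdot>\<^sub>m (Q * E))"
        unfolding L_def using E A Qc by (simp add: smult_l add_mult_d massoc)
      also have "\<dots> = c \<cdot>\<^sub>m (E * A)" using EE QE A E by simp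
      finally show ?thesis .
    qed
    have "A * (c \<cdot>\<^sub>m (E\<^sup>T * M * E)) = (c \<cdot>\<^sub>m (A * E\<^sup>T)) * M * E"
      using A E M by (simp add: smult_l smult_r massoc)
    also have "\<dots> = E\<^sup>T * (L * M) * E" using E M Qc unfolding EtL[symmetric] L_def
      by (simp add: massoc)
    also have "\<dots> = 1\<^sub>m k" using LM EE E by simp
    finally show "A * (c \<cdot>\<^sub>m (E\<^sup>T * M * E)) = 1\<^sub>m k" .
    have "(c \<cdot>\<^sub>m (E\<^sup>T * M * E)) * A = E\<^sup>T * M * (c \<cdot>\<^sub>m (E * A))"
      using A E M by (simp add: smult_l smult_r massoc)
    also have "\<dots> = E\<^sup>T * (M * L) * E" using E M Qc unfolding LE[symmetric] L_def
      by (simp add: massoc)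
    also have "\<dots> = 1\<^sub>m k" using MLi EE E by simp
    finally show "(c \<cdot>\<^sub>m (E\<^sup>T * M * E)) * A = 1\<^sub>m k" .
  qed
qed


lemma sel_props:
  fixes s :: "real vec" and X :: "real mat"
  assumes s: "s \<in> carrier_vec p" and s01: "\<forall>j<p. s $ j = 0 \<or> s $ j = 1"
    and X: "X \<in> carrier_mat n p"
  defines "S \<equiv> {j. j < p \<and> s $ j = 1}"
  defines "E \<equiv> mat p (card S) (\<lambda>(i,a). if i = pick S a then 1 else (0::real))"
  shows "E \<in> carrier_mat p (card S)" "E\<^sup>T * E = 1\<^sub>m (card S)" "E * E\<^sup>T = Tmat s"
    "X * E = Xsub X s"
proof -
  let ?k = "card S"
  have finS: "finite S" unfolding S_def by auto
  have pS: "\<And>a. a < ?k \<Longrightarrow> pick S a \<in> S" by (rule pick_in_set_le)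
  have pp: "\<And>a. a < ?k \<Longrightarrow> pick S a < p" using pS unfolding S_def by auto
  have pinj: "\<And>a b. a < ?k \<Longrightarrow> b < ?k \<Longrightarrow> pick S a = pick S b \<longleftrightarrow> a = b"
    by (metis nat_neq_iff pick_mono_le)
  have pickinv: "\<And>a. a < ?k \<Longrightarrow> card {x\<in>S. x < pick S a} = a" by (rule card_pick_le)
  have ci: "\<And>i. i \<in> S \<Longrightarrow> card {x\<in>S. x < i} < ?k \<and> pick S (card {x\<in>S. x < i}) = i"
  proof -
    fix i assume i: "i \<in> S"
    have "{x\<in>S. x < i} \<subset> S" using i by auto
    hence "card {x\<in>S. x < i} < ?k" using finS by (simp add: psubset_card_mono)
    thus "card {x\<in>S. x < i} < ?k \<and> pick S (card {x\<in>S. x < i}) = i"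
      using pick_card_in_set[OF i] by simp
  qed
  show Ec: "E \<in> carrier_mat p ?k" unfolding E_def by simp
  have Eij: "\<And>i a. i < p \<Longrightarrow> a < ?k \<Longrightarrow> E $$ (i,a) = (if i = pick S a then 1 else 0)"
    unfolding E_def by simp
  show "E\<^sup>T * E = 1\<^sub>m ?k"
  proof (rule eq_matI)
    fix a b assume a: "a < dim_row (1\<^sub>m ?k :: real mat)" and b: "b < dim_col (1\<^sub>m ?k :: real mat)"
    hence a: "a < ?k" and b: "b < ?k" by auto
    have "(E\<^sup>T * E) $$ (a,b) = (\<Sum>i = 0..<p. E $$ (i,a) * E $$ (i,b))"
      using a b Ec by (simp add: scalar_prod_def)
    also have "\<dots> = (\<Sum>i = 0..<p. if i = pick S a then (if a = b then 1 else 0) else 0)"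
      by (rule sum.cong, simp, simp add: Eij a b) (use pinj[OF a b] in auto)
    also have "\<dots> = (if a = b then 1 else 0)" using pp[OF a] by simp
    finally show "(E\<^sup>T * E) $$ (a,b) = 1\<^sub>m ?k $$ (a,b)" using a b by simp
  qed (use Ec in auto)
  show "E * E\<^sup>T = Tmat s"
  proof (rule eq_matI)
    fix i j assume i: "i < dim_row (Tmat s)" and j: "j < dim_col (Tmat s)"
    hence i: "i < p" and j: "j < p" using s by (auto simp: Tmat_def)
    have "(E * E\<^sup>T) $$ (i,j) = (\<Sum>a = 0..<?k. E $$ (i,a) * E $$ (j,a))"
      using i j Ec by (simp add: scalar_prod_def)
    also have "\<dots> = (if i = j then s $ i else 0)"
    proof (cases "i \<in> S")
      case True
      note c = ci[OF True]
      have "(\<Sum>a = 0..<?k. E $$ (i,a) * E $$ (j,a)) =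
        (\<Sum>a = 0..<?k. if a = card {x\<in>S. x < i} then (if i = j then 1 else 0) else 0)"
        by (rule sum.cong, simp, simp add: Eij i j) (use c pickinv in metis)
      also have "\<dots> = (if i = j then s $ i else 0)" using c True unfolding S_def by auto
      finally show ?thesis .
    next
      case False
      have "(\<Sum>a = 0..<?k. E $$ (i,a) * E $$ (j,a)) = (\<Sum>a = 0..<?k. 0)"
        by (rule sum.cong, simp, simp add: Eij i j) (use pS False in metis)
      also have "\<dots> = (if i = j then s $ i else 0)" using False s01 i unfolding S_def by auto
      finally show ?thesis .
    qed
    finally show "(E * E\<^sup>T) $$ (i,j) = Tmat s $$ (i,j)" using i j s by (simp add: Tmat_def)
  qed (use Ec s in \<open>auto simp: Tmat_def\<close>)
  have Sset: "{j. j < dim_vec s \<and> s $ j = 1} = S" using s unfolding S_def by auto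
  have cS: "card {j. j < dim_col X \<and> j \<in> S} = ?k"
  proof -
    have "{j. j < dim_col X \<and> j \<in> S} = S" using X unfolding S_def by auto
    thus ?thesis by simp
  qed
  have cR: "card {i. i < dim_row X \<and> i \<in> (UNIV::nat set)} = n" using X by simp
  show "X * E = Xsub X s"
    unfolding Xsub_def Sset
  proof (rule eq_matI)
    fix r a assume r: "r < dim_row (submatrix X UNIV S)" and a: "a < dim_col (submatrix X UNIV S)"
    hence r: "r < n" and a: "a < ?k" using cS cR by (auto simp: dim_submatrix)
    have "(X * E) $$ (r,a) = (\<Sum>i = 0..<p. X $$ (r,i) * E $$ (i,a))"
      using r a Ec X by (simp add: scalar_prod_def)
    also have "\<dots> = (\<Sum>i = 0..<p. if i = pick S a then X $$ (r, pick S a) else 0)"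
      by (rule sum.cong, simp, simp add: Eij a)
    also have "\<dots> = X $$ (r, pick S a)" using pp[OF a] by simp
    finally show "(X * E) $$ (r,a) = submatrix X UNIV S $$ (r,a)"
      using r a cS cR by (simp add: submatrix_index pick_UNIV)
  qed (use cS cR X Ec in \<open>auto simp: dim_submatrix\<close>)
qed





lemma inv_mat_eq:
  fixes A B :: "real mat"
  assumes A: "A \<in> carrier_mat k k" and B: "B \<in> carrier_mat k k"
    and AB: "A * B = 1\<^sub>m k" and BA: "B * A = 1\<^sub>m k"
  shows "inv_mat A = B"
  unfolding inv_mat_def
proof (rule the_equality)
  show "B \<in> carrier_mat (dim_row A) (dim_row A) \<and> inverts_mat A B \<and> inverts_mat B A"
    using A B AB BA by (simp add: inverts_mat_def)
  fix C assume "C \<in> carrier_mat (dim_row A) (dim_row A) \<and> inverts_mat A C \<and> inverts_mat C A"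
  hence C: "C \<in> carrier_mat k k" and AC: "A * C = 1\<^sub>m k" and CA: "C * A = 1\<^sub>m k"
    using A by (auto simp: inverts_mat_def)
  have "C = C * (A * B)" using C AB by simp
  also have "\<dots> = (C * A) * B" using A B C by simp
  also have "\<dots> = B" using CA B by simp
  finally show "C = B" .
qed

lemma pinv_eq:
  fixes L M :: "real mat"
  assumes L: "L \<in> carrier_mat k k" and M: "M \<in> carrier_mat k k"
    and LM: "L * M = 1\<^sub>m k" and MLi: "M * L = 1\<^sub>m k"
  shows "pinv L = M"
  unfolding pinv_def
proof (rule the_equality)
  show "M \<in> carrier_mat (dim_col L) (dim_row L) \<and> L * M * L = L \<and> M * L * M = M \<and>
    (L * M)\<^sup>T = L * M \<and> (M * L)\<^sup>T = M * L"
    using L M LM MLi by simp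
  fix C assume "C \<in> carrier_mat (dim_col L) (dim_row L) \<and> L * C * L = L \<and> C * L * C = C \<and>
    (L * C)\<^sup>T = L * C \<and> (C * L)\<^sup>T = C * L"
  hence C: "C \<in> carrier_mat k k" and LCL: "L * C * L = L" using L by auto
  have "M = M * L * M" using M MLi by simp
  also have "\<dots> = M * (L * C * L) * M" using LCL by simp
  also have "\<dots> = (M * L) * C * (L * M)" using L M C by (simp add: massoc)
  also have "\<dots> = C" using LM MLi C by simp
  finally show "C = M" by simp
qed

lemma mv_assoc: "dim_col A = dim_row B \<Longrightarrow> dim_vec v = dim_col B \<Longrightarrow> (A * B) *\<^sub>v v = A *\<^sub>v (B *\<^sub>v v)"
  by (rule assoc_mult_mat_vec[of A "dim_row A" "dim_col A" B "dim_col B"]) (auto intro: carrier_vecI)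
lemma mv_smult: "dim_vec v = dim_col A \<Longrightarrow> (A::real mat) *\<^sub>v (c \<cdot>\<^sub>v v) = c \<cdot>\<^sub>v (A *\<^sub>v v)"
  by (rule mult_mat_vec[of A "dim_row A" "dim_col A"]) (auto intro: carrier_vecI)
lemma smult_mv: "dim_vec v = dim_col A \<Longrightarrow> ((c::real) \<cdot>\<^sub>m A) *\<^sub>v v = c \<cdot>\<^sub>v (A *\<^sub>v v)"
  by (rule eq_vecI) (auto simp: scalar_prod_def sum_distrib_left mult.assoc)

lemma smult_smult_v: "(a::real) \<cdot>\<^sub>v (b \<cdot>\<^sub>v v) = (a * b) \<cdot>\<^sub>v v"
  by (rule eq_vecI) auto

theorem theorem2:
  fixes n p :: nat and X :: "real mat" and y s :: "real vec" and \<delta> :: real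
  assumes "0 < n" and "0 < p"
    and "X \<in> carrier_mat n p" and "y \<in> carrier_vec n" and "\<delta> > 0"
    and "s \<in> carrier_vec p" and "\<forall>j<p. s $ j = 0 \<or> s $ j = 1"
  shows "(invertible_mat ((Xsub X s)\<^sup>T * Xsub X s) \<longleftrightarrow> invertible_mat (Lmat X \<delta> s))
    \<and> (invertible_mat ((Xsub X s)\<^sup>T * Xsub X s) \<longrightarrow>
         Xsub X s *\<^sub>v beta_hat X y s = Xt X s *\<^sub>v beta_tilde X y \<delta> s)"
proof -
  note n = assms(1) and X = assms(3) and y = assms(4) and dl = assms(5) and s = assms(6)
  define S where "S = {j. j < p \<and> s $ j = 1}"
  define k where "k = card S"
  define E where "E = mat p k (\<lambda>(i,a). if i = pick S a then 1 else (0::real))"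
  note sp = sel_props[OF s assms(7) X, folded S_def k_def, folded E_def]
  have Ec: "E \<in> carrier_mat p k" and EE: "E\<^sup>T * E = 1\<^sub>m k" and ET: "E * E\<^sup>T = Tmat s"
    and XE: "X * E = Xsub X s" using sp by auto
  define A where "A = (Xsub X s)\<^sup>T * Xsub X s"
  have Et: "E\<^sup>T \<in> carrier_mat k p" using Ec by simp
  have XEc: "X * E \<in> carrier_mat n k" using X Ec by simp
  have Ac: "A \<in> carrier_mat k k" unfolding A_def XE[symmetric] using XEc by simp
  define c where "c = 1 / real n"
  have c0: "c \<noteq> 0" using n unfolding c_def by simp
  have d0: "\<delta> \<noteq> 0" using dl by simp
  define Q where "Q = 1\<^sub>m p - E * E\<^sup>T"
  note ib = inv_block[OF Ec Ac EE c0 d0, folded Q_def]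
  have Qc: "Q \<in> carrier_mat p p" using ib by simp
  define L where "L = c \<cdot>\<^sub>m (E * A * E\<^sup>T + \<delta> \<cdot>\<^sub>m Q)"
  have Lc: "L \<in> carrier_mat p p" unfolding L_def using Ec Ac Qc by simp
  have TT: "Tmat s * Tmat s = E * E\<^sup>T"
  proof -
    have "E * E\<^sup>T * (E * E\<^sup>T) = E * (E\<^sup>T * E) * E\<^sup>T" using Ec by (simp add: massoc)
    thus ?thesis unfolding ET[symmetric] EE using Ec by simp
  qed
  have XtE: "Xt X s = X * E * E\<^sup>T" unfolding Xt_def ET[symmetric] using X Ec by (simp add: massoc)
  have XtT: "(Xt X s)\<^sup>T = E * (X * E)\<^sup>T" unfolding XtE transpose_mult[OF XEc Et] by simp
  have XtX: "(Xt X s)\<^sup>T * Xt X s = E * A * E\<^sup>T"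
    unfolding XtT A_def XE[symmetric] using XtE X Ec by (simp add: massoc)
  have Leq: "Lmat X \<delta> s = L"
    unfolding Lmat_def L_def XtX TT Q_def c_def using X s by simp
  note ib = ib[folded L_def]
  have EQ: "E\<^sup>T * Q = 0\<^sub>m k p" and QE: "Q * E = 0\<^sub>m p k" using ib by auto
  have invA: "\<exists>B. B \<in> carrier_mat k k \<and> A * B = 1\<^sub>m k \<and> B * A = 1\<^sub>m k"
    if "invertible_mat A"
  proof -
    from that obtain B where AB: "A * B = 1\<^sub>m k" and BA: "B * A = 1\<^sub>m (dim_row B)"
      using Ac unfolding invertible_mat_def inverts_mat_def by auto
    have "dim_col B = k" using AB Ac by (metis index_mult_mat(3) index_one_mat(3))
    moreover have "dim_row B = k" using BA Ac by (metis index_mult_mat(3) index_one_mat(3) carrier_matD(2))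
    ultimately show ?thesis using AB BA by auto
  qed
  have invL: "\<exists>M. M \<in> carrier_mat p p \<and> L * M = 1\<^sub>m p \<and> M * L = 1\<^sub>m p"
    if "invertible_mat L"
  proof -
    from that obtain M where AB: "L * M = 1\<^sub>m p" and BA: "M * L = 1\<^sub>m (dim_row M)"
      using Lc unfolding invertible_mat_def inverts_mat_def by auto
    have "dim_col M = p" using AB Lc by (metis index_mult_mat(3) index_one_mat(3))
    moreover have "dim_row M = p" using BA Lc by (metis index_mult_mat(3) index_one_mat(3) carrier_matD(2))
    ultimately show ?thesis using AB BA by auto
  qed
  have mkinv: "invertible_mat C" if "C \<in> carrier_mat m m" "C * D = 1\<^sub>m m" "D * C = 1\<^sub>m m"
    "D \<in> carrier_mat m m" for C D :: "real mat" and m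
    using that unfolding invertible_mat_def inverts_mat_def square_mat.simps by auto
  have iff: "invertible_mat A \<longleftrightarrow> invertible_mat L"
  proof
    assume "invertible_mat A"
    then obtain B where B: "B \<in> carrier_mat k k" "A * B = 1\<^sub>m k" "B * A = 1\<^sub>m k" using invA by blast
    have "(1/c) \<cdot>\<^sub>m (E * B * E\<^sup>T + (1/\<delta>) \<cdot>\<^sub>m Q) \<in> carrier_mat p p" using B Ec Qc by simp
    thus "invertible_mat L" using ib(6)[OF B] Lc mkinv by blast
  next
    assume "invertible_mat L"
    then obtain M where M: "M \<in> carrier_mat p p" "L * M = 1\<^sub>m p" "M * L = 1\<^sub>m p" using invL by blast
    have "c \<cdot>\<^sub>m (E\<^sup>T * M * E) \<in> carrier_mat k k" using M Ec by simp
    thus "invertible_mat A" using ib(7)[OF M] Ac mkinv by blast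
  qed
  have vec: "Xsub X s *\<^sub>v beta_hat X y s = Xt X s *\<^sub>v beta_tilde X y \<delta> s"
    if "invertible_mat A"
  proof -
    from invA[OF that] obtain B where B: "B \<in> carrier_mat k k" "A * B = 1\<^sub>m k" "B * A = 1\<^sub>m k" by blast
    define M where "M = (1/c) \<cdot>\<^sub>m (E * B * E\<^sup>T + (1/\<delta>) \<cdot>\<^sub>m Q)"
    have Mc: "M \<in> carrier_mat p p" unfolding M_def using B Ec Qc by simp
    have LMM: "L * M = 1\<^sub>m p \<and> M * L = 1\<^sub>m p" unfolding M_def by (rule ib(6)[OF B])
    have pM: "pinv L = M" using pinv_eq[OF Lc Mc] LMM by blast
    have iB: "inv_mat A = B" using inv_mat_eq[OF Ac B] .
    have EME: "E\<^sup>T * M * E = (1/c) \<cdot>\<^sub>m B"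
    proof -
      have "E\<^sup>T * M * E = (1/c) \<cdot>\<^sub>m ((E\<^sup>T * E) * B * (E\<^sup>T * E) + (1/\<delta>) \<cdot>\<^sub>m ((E\<^sup>T * Q) * E))"
        unfolding M_def using B Ec Qc
        by (simp add: smult_l smult_r mult_add_d add_mult_d massoc)
      also have "\<dots> = (1/c) \<cdot>\<^sub>m B"
      proof -
        have "1\<^sub>m k * B * 1\<^sub>m k = B" using B by simp
        moreover have "0\<^sub>m k p * E = 0\<^sub>m k k" using Ec by simp
        moreover have "B + (1/\<delta>) \<cdot>\<^sub>m 0\<^sub>m k k = B" using B by (intro eq_matI) auto
        ultimately show ?thesis unfolding EE EQ by simp
      qed
      finally show ?thesis .
    qed
    have XsC: "Xsub X s \<in> carrier_mat n k" using XEc XE by simp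
    have "Xsub X s *\<^sub>v beta_hat X y s = (Xsub X s * B * (Xsub X s)\<^sup>T) *\<^sub>v y"
      unfolding beta_hat_def A_def[symmetric] iB using XsC B y by (simp add: mv_assoc)
    moreover have "Xt X s *\<^sub>v beta_tilde X y \<delta> s = c \<cdot>\<^sub>v ((Xt X s * M * (Xt X s)\<^sup>T) *\<^sub>v y)"
    proof -
      have bt: "beta_tilde X y \<delta> s = M *\<^sub>v (c \<cdot>\<^sub>v ((Xt X s)\<^sup>T *\<^sub>v y))"
        unfolding beta_tilde_def Leq pM c_def using X by simp
      have Xtc: "Xt X s \<in> carrier_mat n p" unfolding XtE using X Ec by simp
      show ?thesis unfolding bt using Xtc Mc y by (simp add: mv_assoc mv_smult)
    qed
    moreover have "Xt X s * M * (Xt X s)\<^sup>T = (X * E) * (E\<^sup>T * M * E) * (X * E)\<^sup>T"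
      unfolding XtT unfolding XtE using X Ec Mc by (simp add: massoc)
    moreover have "(X * E) * ((1/c) \<cdot>\<^sub>m B) * (X * E)\<^sup>T = (1/c) \<cdot>\<^sub>m (Xsub X s * B * (Xsub X s)\<^sup>T)"
      unfolding XE using XsC B by (simp add: smult_l smult_r)
    moreover have "c \<cdot>\<^sub>v (((1/c) \<cdot>\<^sub>m (Xsub X s * B * (Xsub X s)\<^sup>T)) *\<^sub>v y) = (Xsub X s * B * (Xsub X s)\<^sup>T) *\<^sub>v y"
      using c0 XsC B y by (simp add: smult_mv smult_smult_v)
    ultimately show ?thesis unfolding EME by simp
  qed
  show ?thesis using iff vec Leq unfolding A_def by simp
qed


end
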